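(* Let $p>q\ge2$, $V(x)=\frac{|x|^p}{p}-\frac{|x|^q}{q}$ on ${\mathbb R}$, $E(\rho)=\frac12\iint V(x-y)\,d\rho(x)\,d\rho(y)$, and $1\le\lambda<\infty$. Let $r=\big(\frac{q-1}{p-1}\big)^{\frac{1}{p-q}}$, $R=\big(\frac pq\big)^{\frac1{p-q}}$ and $l=R-r$, and suppose $l<r$. Let $\rho$ be a $d_\lambda$-local minimizer of $E$ with $\inf(\operatorname{supp}\rho)=0$ and $\operatorname{supp}\rho\subset[0,R]$. Then $\operatorname{supp}\rho\cap(l,r)=\emptyset$.
   Context: $r$ is the unique positive inflection point of $t\mapsto \frac{t^p}{p}-\frac{t^q}{q}$ on $(0,\infty)$ and $R$ its unique positive zero. $d_\lambda$ is the $\lambda$-Wasserstein distance on the set $\mathcal P_\lambda({\mathbb R})$ of probability measures with finite $\lambda$-th moment; $\rho$ is a $d_\lambda$-local minimizer if there is $\eta>0$ with $E(\rho)\le E(\rho')$ whenever $d_\lambda(\rho,\rho')\le\eta$. *)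

theory Defs
  imports "HOL-Probability.Probability"
begin

definition Vpot :: "real \<Rightarrow> real \<Rightarrow> real \<Rightarrow> real" where
  "Vpot p q x = \<bar>x\<bar> powr p / p - \<bar>x\<bar> powr q / q"

definition P_lambda :: "real \<Rightarrow> real measure set" where
  "P_lambda lam = {\<mu>. prob_space \<mu> \<and> sets \<mu> = sets (borel :: real measure)
      \<and> integrable \<mu> (\<lambda>x. \<bar>x\<bar> powr lam)}"

definition couplings :: "real measure \<Rightarrow> real measure \<Rightarrow> (real \<times> real) measure set" where
  "couplings \<mu> \<nu> = {\<pi>. prob_space \<pi>
      \<and> sets \<pi> = sets (borel \<Otimes>\<^sub>M borel :: (real \<times> real) measure)
      \<and> distr \<pi> borel fst = \<mu> \<and> distr \<pi> borel snd = \<nu>}"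

definition wasserstein :: "real \<Rightarrow> real measure \<Rightarrow> real measure \<Rightarrow> real" where
  "wasserstein lam \<mu> \<nu> =
     enn2real (INF \<pi>\<in>couplings \<mu> \<nu>. \<integral>\<^sup>+ z. ennreal (\<bar>fst z - snd z\<bar> powr lam) \<partial>\<pi>) powr (1 / lam)"

text \<open>Interaction energy E(rho) = 1/2 double integral of V(x-y), valued in
  (-infinity, +infinity] (positive part minus negative part).\<close>
definition energy :: "real \<Rightarrow> real \<Rightarrow> real measure \<Rightarrow> ereal" where
  "energy p q \<rho> = ereal (1/2) *
     (enn2ereal (\<integral>\<^sup>+ z. ennreal (Vpot p q (fst z - snd z)) \<partial>(\<rho> \<Otimes>\<^sub>M \<rho>))
      - enn2ereal (\<integral>\<^sup>+ z. ennreal (- Vpot p q (fst z - snd z)) \<partial>(\<rho> \<Otimes>\<^sub>M \<rho>)))"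

definition msupp :: "real measure \<Rightarrow> real set" where
  "msupp \<rho> = {x. \<forall>e>0. emeasure \<rho> (ball x e) > 0}"

definition local_minimizer :: "real \<Rightarrow> real \<Rightarrow> real \<Rightarrow> real measure \<Rightarrow> bool" where
  "local_minimizer p q lam \<rho> \<longleftrightarrow> \<rho> \<in> P_lambda lam \<and>
     (\<exists>\<eta>>0. \<forall>\<rho>'\<in>P_lambda lam. wasserstein lam \<rho> \<rho>' \<le> \<eta> \<longrightarrow> energy p q \<rho> \<le> energy p q \<rho>')"

end

theory Submission
  imports Defs
begin


definition Wf :: "real \<Rightarrow> real \<Rightarrow> real \<Rightarrow> real" where
  "Wf p q t = t powr p / p - t powr q / q"

lemma Vpot_Wf: "Vpot p q x = Wf p q \<bar>x\<bar>"
  by (simp add: Vpot_def Wf_def)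

lemma Vpot_neg: "Vpot p q (-x) = Vpot p q x" by (simp add: Vpot_def)

lemma Wf_deriv:
  assumes "t > 0" "p > 0" "q > 0"
  shows "(Wf p q has_real_derivative (t powr (p-1) - t powr (q-1))) (at t)"
proof -
  have "((\<lambda>t. t powr p / p - t powr q / q) has_real_derivative
        (p * t powr (p-1) / p - q * t powr (q-1) / q)) (at t)"
    using assms by (auto intro!: derivative_eq_intros)
  thus ?thesis using assms unfolding Wf_def[abs_def] by simp
qed

lemma Wf'_deriv:
  assumes "t > 0"
  shows "((\<lambda>t. t powr (p-1) - t powr (q-1)) has_real_derivative
          ((p-1) * t powr (p-2) - (q-1) * t powr (q-2))) (at t)"
proof -
  have "((\<lambda>t. t powr (p-1) - t powr (q-1)) has_real_derivative
          ((p-1) * t powr (p-1-1) - (q-1) * t powr (q-1-1))) (at t)"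
    using assms by (auto intro!: derivative_eq_intros)
  thus ?thesis by (simp add: algebra_simps)
qed

locale potl =
  fixes p q r :: real
  assumes pq: "p > q" and q2: "q \<ge> 2"
    and r_def: "r = ((q - 1) / (p - 1)) powr (1 / (p - q))"
begin

lemma r_pos: "r > 0" using pq q2 r_def by simp

lemma r_pow: "r powr (p - q) = (q - 1) / (p - 1)"
  using pq q2 r_def by (simp add: powr_powr)

lemma lt_r_pow: assumes "0 \<le> t" "t < r" shows "t powr (p - q) < (q - 1) / (p - 1)"
  using powr_less_mono2[of "p-q" t r] assms pq r_pow by simp

lemma W''_neg: assumes "0 < t" "t < r"
  shows "(p-1) * t powr (p-2) - (q-1) * t powr (q-2) < 0"
proof -
  have e: "t powr (p-2) = t powr (q-2) * t powr (p-q)"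
    using assms by (simp add: powr_add[symmetric])
  have "t powr (p-q) < (q - 1) / (p - 1)" using lt_r_pow[of t] assms by simp
  hence "t powr (p-q) * (p-1) < q - 1" using pq q2 by (simp add: pos_less_divide_eq)
  hence "(p-1) * t powr (p-q) < q - 1" by (simp add: mult.commute)
  moreover have "t powr (q-2) > 0" using assms by simp
  ultimately have "t powr (q-2) * ((p-1) * t powr (p-q)) < t powr (q-2) * (q-1)"
    by simp
  thus ?thesis unfolding e by (simp add: algebra_simps)
qed

lemma W'_neg: assumes "0 < t" "t < r"
  shows "t powr (p-1) - t powr (q-1) < 0"
proof -
  have e: "t powr (p-1) = t powr (q-1) * t powr (p-q)"
    using assms by (simp add: powr_add[symmetric])
  have "(q-1)/(p-1) < 1" using pq q2 by simp
  hence "t powr (p-q) < 1" using lt_r_pow[of t] assms by simp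
  moreover have "t powr (q-1) > 0" using assms by simp
  ultimately show ?thesis unfolding e
    by (simp add: mult_less_cancel_left1)
qed

lemma W'_dec: assumes "0 < a" "a < b" "b < r"
  shows "b powr (p-1) - b powr (q-1) < a powr (p-1) - a powr (q-1)"
proof -
  have "\<exists>y. ((\<lambda>t. t powr (p-1) - t powr (q-1)) has_real_derivative y) (at x) \<and> y < 0"
    if "a \<le> x" "x \<le> b" for x
    using Wf'_deriv[of x p q] W''_neg[of x] that assms by auto
  thus ?thesis by (rule DERIV_neg_imp_decreasing[OF assms(2)])
qed

lemma Wf_cont: "continuous_on {0..} (Wf p q)"
  unfolding Wf_def[abs_def] using pq q2
  by (intro continuous_intros continuous_on_powr') auto

lemma Wf_mvt: assumes "0 \<le> a" "a < b"
  shows "\<exists>z. a < z \<and> z < b \<and> Wf p q b - Wf p q a = (b - a) * (z powr (p-1) - z powr (q-1))"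
proof -
  have c: "continuous_on {a..b} (Wf p q)"
    using Wf_cont continuous_on_subset assms by fastforce
  have "Wf p q differentiable (at x)" if "a < x" "x < b" for x
    using Wf_deriv[of x p q] pq q2 assms that real_differentiable_def by auto
  from MVT[OF assms(2) c this] obtain l z where
    z: "a < z" "z < b" "(Wf p q has_real_derivative l) (at z)" "Wf p q b - Wf p q a = (b - a) * l"
    by blast
  have "l = z powr (p-1) - z powr (q-1)"
    using DERIV_unique[OF z(3) Wf_deriv[of z p q]] z assms pq q2 by simp
  thus ?thesis using z by blast
qed

lemma W_dec: assumes "0 \<le> u" "u < v" "v < r"
  shows "Wf p q v < Wf p q u"
proof -
  obtain z where z: "u < z" "z < v" "Wf p q v - Wf p q u = (v - u) * (z powr (p-1) - z powr (q-1))"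
    using Wf_mvt assms by blast
  have "z powr (p-1) - z powr (q-1) < 0" using W'_neg z assms by simp
  hence "(v - u) * (z powr (p-1) - z powr (q-1)) < 0" using assms by (simp add: mult_pos_neg)
  thus ?thesis using z by simp
qed

lemma W_conc: assumes "0 \<le> a" "a < b" "b < r"
  shows "Wf p q a + Wf p q b < 2 * Wf p q ((a+b)/2)"
proof -
  let ?m = "(a+b)/2"
  obtain z1 where z1: "a < z1" "z1 < ?m" "Wf p q ?m - Wf p q a = (?m - a) * (z1 powr (p-1) - z1 powr (q-1))"
    using Wf_mvt[of a ?m] assms by auto
  obtain z2 where z2: "?m < z2" "z2 < b" "Wf p q b - Wf p q ?m = (b - ?m) * (z2 powr (p-1) - z2 powr (q-1))"
    using Wf_mvt[of ?m b] assms by auto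
  have lt: "z2 powr (p-1) - z2 powr (q-1) < z1 powr (p-1) - z1 powr (q-1)"
    using W'_dec[of z1 z2] z1 z2 assms by simp
  have e: "?m - a = b - ?m" and c: "b - ?m > 0" using assms by (auto simp: field_simps)
  have "(b - ?m) * (z2 powr (p-1) - z2 powr (q-1)) < (b - ?m) * (z1 powr (p-1) - z1 powr (q-1))"
    using mult_strict_left_mono[OF lt c] .
  moreover have "Wf p q ?m - Wf p q a = (b - ?m) * (z1 powr (p-1) - z1 powr (q-1))"
    using z1(3) by (simp only: e)
  ultimately have "Wf p q b - Wf p q ?m < Wf p q ?m - Wf p q a"
    using z2(3) by linarith
  thus ?thesis by linarith
qed

lemma V_sc0: assumes "0 \<le> d" "\<bar>d\<bar> + k < r" "k > 0"
  shows "Vpot p q (d + k) + Vpot p q (d - k) < 2 * Vpot p q d"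
proof (cases "d - k \<ge> 0")
  case True
  then show ?thesis using W_conc[of "d-k" "d+k"] assms by (simp add: Vpot_Wf)
next
  case False
  hence dk: "d < k" by simp
  have "Wf p q (k - d) + Wf p q (d + k) \<le> 2 * Wf p q k"
  proof (cases "d = 0")
    case True then show ?thesis by simp
  next
    case False
    then show ?thesis using W_conc[of "k-d" "d+k"] assms dk by simp
  qed
  moreover have "Wf p q k < Wf p q d" using W_dec[of d k] assms dk by simp
  moreover have "Vpot p q (d + k) = Wf p q (d + k)" using assms by (simp add: Vpot_Wf)
  moreover have "Vpot p q (d - k) = Wf p q (k - d)" using dk by (simp add: Vpot_Wf)
  moreover have "Vpot p q d = Wf p q d" using assms by (simp add: Vpot_Wf)
  ultimately show ?thesis by linarith
qed

lemma V_sc: assumes "\<bar>d\<bar> + k < r" "k > 0"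
  shows "Vpot p q (d + k) + Vpot p q (d - k) < 2 * Vpot p q d"
proof (cases "d \<ge> 0")
  case True thus ?thesis using V_sc0[of d k] assms by simp
next
  case False
  have "Vpot p q (-d + k) + Vpot p q (-d - k) < 2 * Vpot p q (-d)"
    using V_sc0[of "-d" k] assms False by simp
  moreover have "Vpot p q (-d + k) = Vpot p q (d - k)" "Vpot p q (-d - k) = Vpot p q (d + k)"
     "Vpot p q (-d) = Vpot p q d"
    using Vpot_neg[where x="d-k"] Vpot_neg[where x="d+k"] Vpot_neg[where x=d] by simp_all
  ultimately show ?thesis by linarith
qed

end


lemma supp_AE:
  assumes "sets \<rho> = sets (borel :: real measure)"
  shows "AE x in \<rho>. x \<in> msupp \<rho>"
proof -
  define F where "F = {ball x e | x e. e > 0 \<and> emeasure \<rho> (ball x e) = 0}"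
  have op: "\<And>S. S \<in> F \<Longrightarrow> open S" unfolding F_def by auto
  obtain F' where F': "F' \<subseteq> F" "countable F'" "\<Union>F' = \<Union>F"
    using Lindelof[OF op] by metis
  have nS: "S \<in> null_sets \<rho>" if "S \<in> F'" for S
  proof -
    from that F' obtain x e where S: "S = ball x e" "emeasure \<rho> (ball x e) = 0"
      unfolding F_def by auto
    have "S \<in> sets \<rho>" using assms S by simp
    thus ?thesis using S by (simp add: null_sets_def)
  qed
  have "\<Union>((\<lambda>S. S) ` F') \<in> null_sets \<rho>"
    by (rule null_sets_UN'[OF F'(2)]) (use nS in auto)
  hence N: "\<Union>F' \<in> null_sets \<rho>" by simp
  show ?thesis
  proof (rule AE_I'[OF N])
    show "{x \<in> space \<rho>. x \<notin> msupp \<rho>} \<subseteq> \<Union>F'"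
    proof
      fix x assume "x \<in> {x \<in> space \<rho>. x \<notin> msupp \<rho>}"
      then obtain e where e: "e > 0" "\<not> emeasure \<rho> (ball x e) > 0"
        unfolding msupp_def by auto
      hence "ball x e \<in> F" unfolding F_def by (auto simp: zero_less_iff_neq_zero)
      moreover have "x \<in> ball x e" using e by simp
      ultimately show "x \<in> \<Union>F'" using F'(3) by blast
    qed
  qed
qed

lemma integrable_bdd:
  assumes "finite_measure M" "f \<in> borel_measurable M" "\<And>x. \<bar>f x\<bar> \<le> (B::real)"
  shows "integrable M f"
  using finite_measure.integrable_const_bound[OF assms(1), of f B] assms by auto

definition Vc :: "real \<Rightarrow> real \<Rightarrow> real \<Rightarrow> real \<Rightarrow> real" where
  "Vc p q K d = Vpot p q (max (-K) (min K d))"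

lemma Vpot_bound: assumes "\<bar>y\<bar> \<le> K" "p > 0" "q > 0"
  shows "\<bar>Vpot p q y\<bar> \<le> K powr p / p + K powr q / q"
proof -
  have "\<bar>y\<bar> powr p \<le> K powr p" "\<bar>y\<bar> powr q \<le> K powr q"
    using assms by (auto intro: powr_mono2)
  thus ?thesis using assms unfolding Vpot_def
    by (smt (verit, ccfv_SIG) divide_nonneg_pos divide_right_mono powr_ge_zero)
qed

lemma Vc_bound: assumes "K \<ge> 0" "p > 0" "q > 0"
  shows "\<bar>Vc p q K y\<bar> \<le> K powr p / p + K powr q / q"
  unfolding Vc_def using assms by (intro Vpot_bound) auto

lemma Vc_meas[measurable]: "Vc p q K \<in> borel_measurable borel"
  unfolding Vc_def Vpot_def by measurable

lemma energy_eq: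
  assumes ps: "prob_space \<mu>" and sb: "sets \<mu> = sets (borel :: real measure)"
    and ae: "AE x in \<mu>. \<bar>x\<bar> \<le> M" and K: "2 * M \<le> K" and K0: "K \<ge> 0" and pq: "p > 0" "q > 0"
  shows "energy p q \<mu> = ereal (1/2 * (\<integral>z. Vc p q K (fst z - snd z) \<partial>(\<mu> \<Otimes>\<^sub>M \<mu>)))"
proof -
  interpret pair_sigma_finite \<mu> \<mu>
    using ps by (simp add: pair_sigma_finite_def prob_space_imp_sigma_finite)
  have fm: "finite_measure (\<mu> \<Otimes>\<^sub>M \<mu>)"
    using ps by (simp add: prob_space.finite_measure prob_space_pair)
  let ?f = "\<lambda>z. Vpot p q (fst z - snd z)"
  let ?g = "\<lambda>z. Vc p q K (fst z - snd z)"
  have mg: "?g \<in> borel_measurable (\<mu> \<Otimes>\<^sub>M \<mu>)"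
    using sb by (simp cong: measurable_cong_sets)
  have mf: "?f \<in> borel_measurable (\<mu> \<Otimes>\<^sub>M \<mu>)"
    using sb unfolding Vpot_def by (simp cong: measurable_cong_sets)
  have ig: "integrable (\<mu> \<Otimes>\<^sub>M \<mu>) ?g"
    by (rule integrable_bdd[OF fm mg Vc_bound[OF K0 pq]])
  have "AE x in \<mu>. AE y in \<mu>. ?f (x,y) = ?g (x,y)"
    using ae
  proof eventually_elim
    case (elim x)
    show ?case using ae
    proof eventually_elim
      case (elim y)
      with \<open>\<bar>x\<bar> \<le> M\<close> K have "\<bar>x - y\<bar> \<le> K" by linarith
      thus ?case by (simp add: Vc_def)
    qed
  qed
  hence aeq: "AE z in \<mu> \<Otimes>\<^sub>M \<mu>. ?f z = ?g z"
    by (intro AE_pair_measure) (use mf mg in auto)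
  have if_: "integrable (\<mu> \<Otimes>\<^sub>M \<mu>) ?f"
    using integrable_cong_AE[OF mf mg aeq] ig by simp
  have eqi: "integral\<^sup>L (\<mu> \<Otimes>\<^sub>M \<mu>) ?f = integral\<^sup>L (\<mu> \<Otimes>\<^sub>M \<mu>) ?g"
    by (rule integral_cong_AE[OF mf mg aeq])
  define A where "A = (\<integral>\<^sup>+ z. ennreal (?f z) \<partial>(\<mu> \<Otimes>\<^sub>M \<mu>))"
  define B where "B = (\<integral>\<^sup>+ z. ennreal (- ?f z) \<partial>(\<mu> \<Otimes>\<^sub>M \<mu>))"
  have A: "A \<noteq> \<infinity>" "B \<noteq> \<infinity>" using integrableD(2,3)[OF if_] unfolding A_def B_def by auto
  have "enn2ereal A = ereal (enn2real A)" "enn2ereal B = ereal (enn2real B)"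
    using A by (simp_all add: enn2ereal_ennreal[symmetric] less_top)
  moreover have "integral\<^sup>L (\<mu> \<Otimes>\<^sub>M \<mu>) ?f = enn2real A - enn2real B"
    unfolding A_def B_def by (rule real_lebesgue_integral_def[OF if_])
  ultimately show ?thesis
    unfolding energy_def A_def[symmetric] B_def[symmetric] eqi[symmetric] by simp
qed



definition coin :: "bool measure" where "coin = measure_pmf (bernoulli_pmf (1/2))"

definition Tm :: "real \<Rightarrow> real set \<Rightarrow> real \<times> bool \<Rightarrow> real" where
  "Tm h B = (\<lambda>(x,s). x + (if s then h else -h) * indicator B x)"

definition mix :: "real measure \<Rightarrow> real \<Rightarrow> real set \<Rightarrow> real measure" where
  "mix \<rho> h B = distr (\<rho> \<Otimes>\<^sub>M coin) borel (Tm h B)"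

lemma Tm_meas:
  assumes "sets \<rho> = sets (borel :: real measure)" "B \<in> sets borel"
  shows "Tm h B \<in> \<rho> \<Otimes>\<^sub>M coin \<rightarrow>\<^sub>M borel"
proof -
  have "Tm h B \<in> borel \<Otimes>\<^sub>M count_space UNIV \<rightarrow>\<^sub>M borel"
    unfolding Tm_def using assms(2) by measurable
  moreover have "sets (\<rho> \<Otimes>\<^sub>M coin) = sets (borel \<Otimes>\<^sub>M count_space UNIV)"
    using assms(1) unfolding coin_def by (intro sets_pair_measure_cong) auto
  ultimately show ?thesis by (simp cong: measurable_cong_sets)
qed

lemma mix_prob:
  assumes "prob_space \<rho>" "sets \<rho> = sets (borel :: real measure)" "B \<in> sets borel"
  shows "prob_space (mix \<rho> h B)"
  unfolding mix_def coin_def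
  by (rule prob_space.prob_space_distr[OF prob_space_pair[OF assms(1)]])
     (use Tm_meas[OF assms(2,3)] in \<open>auto simp: coin_def prob_space_measure_pmf\<close>)

lemma mix_integral:
  fixes g :: "real \<Rightarrow> real"
  assumes ps: "prob_space \<rho>" and sb: "sets \<rho> = sets (borel :: real measure)" and B: "B \<in> sets borel"
    and g: "g \<in> borel_measurable borel" and gb: "\<And>x. \<bar>g x\<bar> \<le> Bd"
  shows "integral\<^sup>L (mix \<rho> h B) g =
     (\<integral>x. (g (x + h * indicator B x) + g (x - h * indicator B x)) / 2 \<partial>\<rho>)"
proof -
  interpret pair_sigma_finite \<rho> coin
    using ps unfolding coin_def
    by (simp add: pair_sigma_finite_def prob_space_imp_sigma_finite prob_space_measure_pmf)
  have fm: "finite_measure (\<rho> \<Otimes>\<^sub>M coin)"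
    using ps by (simp add: coin_def prob_space.finite_measure prob_space_pair prob_space_measure_pmf)
  have Tm: "Tm h B \<in> \<rho> \<Otimes>\<^sub>M coin \<rightarrow>\<^sub>M borel" by (rule Tm_meas[OF sb B])
  have m: "(\<lambda>z. g (Tm h B z)) \<in> borel_measurable (\<rho> \<Otimes>\<^sub>M coin)"
    using Tm g by measurable
  have "integral\<^sup>L (mix \<rho> h B) g = (\<integral>z. g (Tm h B z) \<partial>(\<rho> \<Otimes>\<^sub>M coin))"
    unfolding mix_def by (rule integral_distr[OF Tm g])
  also have "\<dots> = (\<integral>x. \<integral>s. g (Tm h B (x,s)) \<partial>coin \<partial>\<rho>)"
    by (rule integral_fst'[symmetric]) (rule integrable_bdd[OF fm m gb])
  also have "\<dots> = (\<integral>x. (g (x + h * indicator B x) + g (x - h * indicator B x)) / 2 \<partial>\<rho>)"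
    by (rule Bochner_Integration.integral_cong)
       (auto simp: coin_def integral_bernoulli_pmf Tm_def)
  finally show ?thesis .
qed



lemma mix_sets: "sets (mix \<rho> h B) = sets borel" by (simp add: mix_def)

lemma bdd_integral_prob:
  fixes f :: "'a \<Rightarrow> real"
  assumes "prob_space M" "f \<in> borel_measurable M" "\<And>x. \<bar>f x\<bar> \<le> Bd"
  shows "\<bar>integral\<^sup>L M f\<bar> \<le> Bd"
proof -
  have fm: "finite_measure M" using assms(1) by (rule prob_space.finite_measure)
  have "\<bar>integral\<^sup>L M f\<bar> \<le> (\<integral>x. \<bar>f x\<bar> \<partial>M)" by (rule integral_abs_bound)
  also have "\<dots> \<le> (\<integral>x. Bd \<partial>M)"
    by (rule integral_mono) (auto intro: integrable_bdd[OF fm, of _ Bd] assms finite_measure.integrable_const[OF fm])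
  also have "\<dots> = Bd" using assms(1) by (simp add: prob_space.prob_space)
  finally show ?thesis .
qed

lemma mix2_integral:
  fixes F :: "real \<Rightarrow> real \<Rightarrow> real"
  assumes ps: "prob_space \<rho>" and sb: "sets \<rho> = sets (borel :: real measure)" and B: "B \<in> sets borel"
    and Fm[measurable]: "(\<lambda>(x, y). F x y) \<in> borel_measurable (borel \<Otimes>\<^sub>M borel)"
    and Fb: "\<And>u v. \<bar>F u v\<bar> \<le> Bd"
  shows "(\<integral>z. F (fst z) (snd z) \<partial>(mix \<rho> h B \<Otimes>\<^sub>M mix \<rho> h B)) =
    (\<integral>z. (F (fst z + h * indicator B (fst z)) (snd z + h * indicator B (snd z))
          + F (fst z + h * indicator B (fst z)) (snd z - h * indicator B (snd z))
          + F (fst z - h * indicator B (fst z)) (snd z + h * indicator B (snd z))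
          + F (fst z - h * indicator B (fst z)) (snd z - h * indicator B (snd z))) / 4
      \<partial>(\<rho> \<Otimes>\<^sub>M \<rho>))"
proof -
  let ?M = "mix \<rho> h B"
  let ?b = "indicator B :: real \<Rightarrow> real"
  have psM: "prob_space ?M" by (rule mix_prob[OF ps sb B])
  interpret MM: pair_sigma_finite ?M ?M
    using psM by (simp add: pair_sigma_finite_def prob_space_imp_sigma_finite)
  interpret RR: pair_sigma_finite \<rho> \<rho>
    using ps by (simp add: pair_sigma_finite_def prob_space_imp_sigma_finite)
  interpret R: prob_space \<rho> by (rule ps)
  have fmMM: "finite_measure (?M \<Otimes>\<^sub>M ?M)"
    using psM by (simp add: prob_space.finite_measure prob_space_pair)
  have fmRR: "finite_measure (\<rho> \<Otimes>\<^sub>M \<rho>)"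
    using ps by (simp add: prob_space.finite_measure prob_space_pair)
  have fmR: "finite_measure \<rho>" using ps by (rule prob_space.finite_measure)
  have sMM: "sets (?M \<Otimes>\<^sub>M ?M) = sets (borel \<Otimes>\<^sub>M borel)"
    by (intro sets_pair_measure_cong) (simp_all add: mix_sets)
  have sRR: "sets (\<rho> \<Otimes>\<^sub>M \<rho>) = sets (borel \<Otimes>\<^sub>M borel)"
    by (intro sets_pair_measure_cong) (simp_all add: sb)
  have mB[measurable]: "B \<in> sets borel" by (rule B)
  define P where "P u y = (F u (y + h * ?b y) + F u (y - h * ?b y)) / 2" for u y
  define G where "G u = (\<integral>y. P u y \<partial>\<rho>)" for u
  have Pm[measurable]: "(\<lambda>(u, y). P u y) \<in> borel_measurable (borel \<Otimes>\<^sub>M borel)"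
    unfolding P_def by measurable
  have Pb: "\<bar>P u y\<bar> \<le> Bd" for u y
    using Fb[of u "y + h * ?b y"] Fb[of u "y - h * ?b y"] unfolding P_def by (simp add: abs_le_iff)
  have Pu: "P u \<in> borel_measurable \<rho>" for u
    using sb by (simp cong: measurable_cong_sets)
  have Gm[measurable]: "G \<in> borel_measurable borel"
  proof -
    have "(\<lambda>(u, y). P u y) \<in> borel_measurable (borel \<Otimes>\<^sub>M \<rho>)"
    proof -
      have "sets (borel \<Otimes>\<^sub>M \<rho>) = sets (borel \<Otimes>\<^sub>M borel)"
        by (intro sets_pair_measure_cong) (simp_all add: sb)
      thus ?thesis by (subst measurable_cong_sets[OF _ refl]) (assumption, rule Pm)
    qed
    thus ?thesis unfolding G_def[abs_def]
      by (rule sigma_finite_measure.borel_measurable_lebesgue_integral[OF prob_space_imp_sigma_finite[OF ps]])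
  qed
  have Gb: "\<bar>G u\<bar> \<le> Bd" for u
    unfolding G_def by (rule bdd_integral_prob[OF ps Pu Pb])
  have "(\<lambda>z. F (fst z) (snd z)) \<in> borel_measurable (borel \<Otimes>\<^sub>M borel)" by measurable
  hence FMM: "(\<lambda>z. F (fst z) (snd z)) \<in> borel_measurable (?M \<Otimes>\<^sub>M ?M)"
    using sMM by (simp cong: measurable_cong_sets)
  have "(\<integral>z. F (fst z) (snd z) \<partial>(?M \<Otimes>\<^sub>M ?M)) = (\<integral>u. \<integral>v. F u v \<partial>?M \<partial>?M)"
    using MM.integral_fst'[OF integrable_bdd[OF fmMM FMM Fb]] by simp
  also have "\<dots> = (\<integral>u. G u \<partial>?M)"
  proof (rule Bochner_Integration.integral_cong[OF refl])
    fix u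
    have "F u \<in> borel_measurable borel" by measurable
    then show "(\<integral>v. F u v \<partial>?M) = G u"
      unfolding G_def P_def by (rule mix_integral[OF ps sb B _ Fb])
  qed
  also have "\<dots> = (\<integral>x. (G (x + h * ?b x) + G (x - h * ?b x)) / 2 \<partial>\<rho>)"
    by (rule mix_integral[OF ps sb B Gm Gb])
  also have "\<dots> = (\<integral>x. \<integral>y. (P (x + h * ?b x) y + P (x - h * ?b x) y) / 2 \<partial>\<rho> \<partial>\<rho>)"
  proof (rule Bochner_Integration.integral_cong[OF refl])
    fix x
    have i1: "integrable \<rho> (P (x + h * ?b x))" by (rule integrable_bdd[OF fmR Pu Pb])
    have i2: "integrable \<rho> (P (x - h * ?b x))" by (rule integrable_bdd[OF fmR Pu Pb])
    show "(G (x + h * ?b x) + G (x - h * ?b x)) / 2 = (\<integral>y. (P (x + h * ?b x) y + P (x - h * ?b x) y) / 2 \<partial>\<rho>)"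
      unfolding G_def integral_divide_zero Bochner_Integration.integral_add[OF i1 i2] ..
  qed
  also have "\<dots> = (\<integral>z. (P (fst z + h * ?b (fst z)) (snd z) + P (fst z - h * ?b (fst z)) (snd z)) / 2 \<partial>(\<rho> \<Otimes>\<^sub>M \<rho>))"
  proof -
    have "(\<lambda>z. (P (fst z + h * ?b (fst z)) (snd z) + P (fst z - h * ?b (fst z)) (snd z)) / 2) \<in> borel_measurable (borel \<Otimes>\<^sub>M borel)"
      by measurable
    hence m: "(\<lambda>z. (P (fst z + h * ?b (fst z)) (snd z) + P (fst z - h * ?b (fst z)) (snd z)) / 2) \<in> borel_measurable (\<rho> \<Otimes>\<^sub>M \<rho>)"
      using sRR by (simp cong: measurable_cong_sets)
    have "\<bar>(P (fst z + h * ?b (fst z)) (snd z) + P (fst z - h * ?b (fst z)) (snd z)) / 2\<bar> \<le> Bd" for z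
      using Pb[of "fst z + h * ?b (fst z)" "snd z"] Pb[of "fst z - h * ?b (fst z)" "snd z"]
      by (simp add: abs_le_iff)
    from RR.integral_fst'[OF integrable_bdd[OF fmRR m this]] show ?thesis by simp
  qed
  finally show ?thesis
    unfolding P_def by (simp add: add_divide_distrib diff_divide_distrib algebra_simps)
qed



lemma wass_bound:
  assumes ps: "prob_space \<rho>" and sb: "sets \<rho> = sets (borel :: real measure)" and B: "B \<in> sets borel"
    and h: "h \<ge> 0" and lam: "lam > 0"
  shows "wasserstein lam \<rho> (mix \<rho> h B) \<le> h"
proof -
  let ?\<Omega> = "\<rho> \<Otimes>\<^sub>M coin"
  define G where "G = (\<lambda>\<omega>. (fst \<omega>, Tm h B \<omega>))"
  define \<pi> where "\<pi> = distr ?\<Omega> (borel \<Otimes>\<^sub>M borel) G"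
  have Tm: "Tm h B \<in> ?\<Omega> \<rightarrow>\<^sub>M borel" by (rule Tm_meas[OF sb B])
  have fstm: "fst \<in> ?\<Omega> \<rightarrow>\<^sub>M borel"
    using measurable_fst[of \<rho> coin] sb by (simp cong: measurable_cong_sets)
  have Gm: "G \<in> ?\<Omega> \<rightarrow>\<^sub>M borel \<Otimes>\<^sub>M borel"
    unfolding G_def using fstm Tm by (rule measurable_Pair)
  have psO: "prob_space ?\<Omega>"
    using ps by (simp add: coin_def prob_space_pair prob_space_measure_pmf)
  have dfst: "distr ?\<Omega> borel fst = \<rho>"
  proof -
    have "distr ?\<Omega> borel fst = distr ?\<Omega> \<rho> fst"
      by (rule distr_cong) (use sb in auto)
    also have "\<dots> = \<rho>" unfolding coin_def by (rule measure_pmf.distr_pair_fst)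
    finally show ?thesis .
  qed
  have cp: "\<pi> \<in> couplings \<rho> (mix \<rho> h B)"
    unfolding couplings_def
  proof (intro CollectI conjI)
    show "prob_space \<pi>" unfolding \<pi>_def by (rule prob_space.prob_space_distr[OF psO Gm])
    show "sets \<pi> = sets (borel \<Otimes>\<^sub>M borel)" unfolding \<pi>_def by simp
    have "distr \<pi> borel fst = distr ?\<Omega> borel (fst \<circ> G)"
      unfolding \<pi>_def by (rule distr_distr[OF measurable_fst Gm])
    also have "fst \<circ> G = fst" unfolding G_def by auto
    finally show "distr \<pi> borel fst = \<rho>" using dfst by simp
    have "distr \<pi> borel snd = distr ?\<Omega> borel (snd \<circ> G)"
      unfolding \<pi>_def by (rule distr_distr[OF measurable_snd Gm])
    also have "snd \<circ> G = Tm h B" unfolding G_def by auto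
    finally show "distr \<pi> borel snd = mix \<rho> h B" by (simp add: mix_def)
  qed
  let ?I = "(INF \<pi>\<in>couplings \<rho> (mix \<rho> h B). \<integral>\<^sup>+ z. ennreal (\<bar>fst z - snd z\<bar> powr lam) \<partial>\<pi>)"
  have "?I \<le> (\<integral>\<^sup>+ z. ennreal (\<bar>fst z - snd z\<bar> powr lam) \<partial>\<pi>)"
    by (rule INF_lower[OF cp])
  also have "\<dots> = (\<integral>\<^sup>+ \<omega>. ennreal (\<bar>fst (G \<omega>) - snd (G \<omega>)\<bar> powr lam) \<partial>?\<Omega>)"
    unfolding \<pi>_def by (rule nn_integral_distr[OF Gm]) measurable
  also have "\<dots> \<le> (\<integral>\<^sup>+ \<omega>. ennreal (h powr lam) \<partial>?\<Omega>)"
  proof (rule nn_integral_mono)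
    fix \<omega> :: "real \<times> bool"
    obtain x s where w: "\<omega> = (x, s)" by (cases \<omega>)
    have "\<bar>fst (G \<omega>) - snd (G \<omega>)\<bar> \<le> h"
      using h by (auto simp: G_def Tm_def w indicator_def)
    hence "\<bar>fst (G \<omega>) - snd (G \<omega>)\<bar> powr lam \<le> h powr lam"
      using lam by (intro powr_mono2) auto
    thus "ennreal (\<bar>fst (G \<omega>) - snd (G \<omega>)\<bar> powr lam) \<le> ennreal (h powr lam)"
      by (rule ennreal_leI)
  qed
  also have "\<dots> = ennreal (h powr lam)"
    using prob_space.emeasure_space_1[OF psO] by simp
  finally have I: "?I \<le> ennreal (h powr lam)" .
  have "enn2real ?I \<le> enn2real (ennreal (h powr lam))"
    by (rule enn2real_mono[OF I]) simp
  hence I2: "enn2real ?I \<le> h powr lam" by simp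
  have "wasserstein lam \<rho> (mix \<rho> h B) = enn2real ?I powr (1 / lam)"
    unfolding wasserstein_def ..
  also have "\<dots> \<le> (h powr lam) powr (1 / lam)"
    using I2 lam by (intro powr_mono2) auto
  also have "\<dots> = h" using lam h by (simp add: powr_powr)
  finally show ?thesis .
qed



context potl begin

lemma avg_le:
  fixes x y x0 \<epsilon> h R :: real
  defines "b \<equiv> indicator (ball x0 \<epsilon>) :: real \<Rightarrow> real"
  defines "H \<equiv> (Vpot p q ((x + h * b x) - (y + h * b y)) + Vpot p q ((x + h * b x) - (y - h * b y))
      + Vpot p q ((x - h * b x) - (y + h * b y)) + Vpot p q ((x - h * b x) - (y - h * b y))) / 4"
  assumes xy: "x \<in> {0..R}" "y \<in> {0..R}" and h: "h > 0"
    and c1: "x0 + \<epsilon> + 2*h < r" and c2: "R - x0 + \<epsilon> + 2*h < r" and c3: "2*\<epsilon> + 2*h < r"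
  shows "H \<le> Vpot p q (x - y)" "x \<in> ball x0 \<epsilon> \<Longrightarrow> y \<notin> ball x0 \<epsilon> \<Longrightarrow> H < Vpot p q (x - y)"
proof -
  let ?d = "x - y"
  have case1: "H < Vpot p q ?d" if "x \<in> ball x0 \<epsilon>" "y \<notin> ball x0 \<epsilon>"
  proof -
    have bx: "b x = 1" "b y = 0" using that by (auto simp: b_def)
    have "dist x0 x < \<epsilon>" using that by simp
    hence "\<bar>?d\<bar> + h < r" using xy c1 c2 h by (auto simp: dist_real_def abs_if split: if_splits)
    hence "Vpot p q (?d + h) + Vpot p q (?d - h) < 2 * Vpot p q ?d" using V_sc h by blast
    moreover have "H = (Vpot p q (?d + h) + Vpot p q (?d - h)) / 2"
      unfolding H_def bx by (simp add: algebra_simps)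
    ultimately show ?thesis by simp
  qed
  have case2: "H < Vpot p q ?d" if "x \<notin> ball x0 \<epsilon>" "y \<in> ball x0 \<epsilon>"
  proof -
    have bx: "b x = 0" "b y = 1" using that by (auto simp: b_def)
    have "dist x0 y < \<epsilon>" using that by simp
    hence "\<bar>?d\<bar> + h < r" using xy c1 c2 h by (auto simp: dist_real_def abs_if split: if_splits)
    hence "Vpot p q (?d + h) + Vpot p q (?d - h) < 2 * Vpot p q ?d" using V_sc h by blast
    moreover have "H = (Vpot p q (?d + h) + Vpot p q (?d - h)) / 2"
      unfolding H_def bx by (simp add: algebra_simps)
    ultimately show ?thesis by simp
  qed
  have case3: "H < Vpot p q ?d" if "x \<in> ball x0 \<epsilon>" "y \<in> ball x0 \<epsilon>"
  proof -
    have bx: "b x = 1" "b y = 1" using that by (auto simp: b_def)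
    have "dist x0 y < \<epsilon>" "dist x0 x < \<epsilon>" using that by auto
    hence "\<bar>?d\<bar> + 2*h < r" using c3 h by (auto simp: dist_real_def abs_if split: if_splits)
    hence "Vpot p q (?d + 2*h) + Vpot p q (?d - 2*h) < 2 * Vpot p q ?d" using V_sc h
      by (metis mult_pos_pos zero_less_numeral)
    moreover have "H = (Vpot p q (?d + 2*h) + Vpot p q (?d - 2*h) + 2 * Vpot p q ?d) / 4"
      unfolding H_def bx by (simp add: algebra_simps)
    ultimately show ?thesis by simp
  qed
  have case4: "H = Vpot p q ?d" if "x \<notin> ball x0 \<epsilon>" "y \<notin> ball x0 \<epsilon>"
  proof -
    have bx: "b x = 0" "b y = 0" using that by (auto simp: b_def)
    show ?thesis unfolding H_def bx by simp
  qed
  show "H \<le> Vpot p q (x - y)" using case1 case2 case3 case4 by fastforce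
  show "x \<in> ball x0 \<epsilon> \<Longrightarrow> y \<notin> ball x0 \<epsilon> \<Longrightarrow> H < Vpot p q (x - y)" using case1 by blast
qed

end



theorem lemma2:
  fixes p q lam :: real and \<rho> :: "real measure"
  assumes "p > q" "q \<ge> 2" "1 \<le> lam"
    and "r = ((q - 1) / (p - 1)) powr (1 / (p - q))"
    and "R = (p / q) powr (1 / (p - q))"
    and "l = R - r"
    and "l < r"
    and "local_minimizer p q lam \<rho>"
    and "Inf (msupp \<rho>) = 0"
    and "msupp \<rho> \<subseteq> {0..R}"
  shows "msupp \<rho> \<inter> {l<..<r} = {}"
proof (rule ccontr)
  assume "msupp \<rho> \<inter> {l<..<r} \<noteq> {}"
  then obtain x0 where x0: "x0 \<in> msupp \<rho>" "l < x0" "x0 < r" by auto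
  interpret potl p q r using assms(1,2,4) by unfold_locales auto
  have pq: "p > 0" "q > 0" using assms(1,2) by auto
  from assms(8) obtain \<eta> where \<rho>P: "\<rho> \<in> P_lambda lam" and \<eta>: "\<eta> > 0"
    and minim: "\<And>\<rho>'. \<rho>' \<in> P_lambda lam \<Longrightarrow> wasserstein lam \<rho> \<rho>' \<le> \<eta> \<Longrightarrow> energy p q \<rho> \<le> energy p q \<rho>'"
    unfolding local_minimizer_def by blast
  have ps: "prob_space \<rho>" and sb: "sets \<rho> = sets (borel :: real measure)"
    using \<rho>P unfolding P_lambda_def by auto
  interpret R: prob_space \<rho> by (rule ps)
  interpret RR: pair_sigma_finite \<rho> \<rho>
    using ps by (simp add: pair_sigma_finite_def prob_space_imp_sigma_finite)
  have "(q - 1) / (p - 1) < 1" "1 < p / q" using assms(1,2) by simp_all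
  hence "(q - 1) / (p - 1) < p / q" by linarith
  hence rR: "r < R" unfolding assms(4,5)
    using assms(1,2) by (intro powr_less_mono2) auto
  hence l0: "l > 0" using assms(6) by simp
  define \<kappa> where "\<kappa> = min (min (r - x0) (x0 - l)) (r / 2)"
  have \<kappa>: "\<kappa> > 0" using x0 r_pos unfolding \<kappa>_def by auto
  define \<epsilon> where "\<epsilon> = \<kappa> / 4"
  define h where "h = min (\<kappa> / 4) \<eta>"
  have h0: "h > 0" "h \<le> \<eta>" "h \<le> \<kappa> / 4" using \<kappa> \<eta> unfolding h_def by auto
  have e0: "\<epsilon> > 0" using \<kappa> unfolding \<epsilon>_def by simp
  have c1: "x0 + \<epsilon> + 2*h < r" and c2: "R - x0 + \<epsilon> + 2*h < r" and c3: "2*\<epsilon> + 2*h < r"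
  proof -
    have "\<kappa> \<le> r - x0" "\<kappa> \<le> x0 - l" "\<kappa> \<le> r / 2" unfolding \<kappa>_def
      by (metis min.cobounded1 min.cobounded2 order.trans)+
    thus "x0 + \<epsilon> + 2*h < r" "R - x0 + \<epsilon> + 2*h < r" "2*\<epsilon> + 2*h < r"
      using h0 \<kappa> r_pos assms(6) unfolding \<epsilon>_def by linarith+
  qed
  define B where "B = ball x0 \<epsilon>"
  have Bm[measurable]: "B \<in> sets borel" unfolding B_def by simp
  have ae0: "AE x in \<rho>. x \<in> {0..R}"
    using supp_AE[OF sb] by eventually_elim (use assms(10) in blast)
  let ?M = "mix \<rho> h B"
  have psM: "prob_space ?M" by (rule mix_prob[OF ps sb Bm])
  have sM: "sets ?M = sets borel" by (rule mix_sets)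
  have Tm: "Tm h B \<in> \<rho> \<Otimes>\<^sub>M coin \<rightarrow>\<^sub>M borel" by (rule Tm_meas[OF sb Bm])
  have aeO: "AE \<omega> in \<rho> \<Otimes>\<^sub>M coin. fst \<omega> \<in> {0..R}"
  proof (rule AE_distrD[of fst _ \<rho>])
    show "fst \<in> \<rho> \<Otimes>\<^sub>M coin \<rightarrow>\<^sub>M \<rho>" by (rule measurable_fst)
    show "AE x in distr (\<rho> \<Otimes>\<^sub>M coin) \<rho> fst. x \<in> {0..R}"
      unfolding coin_def measure_pmf.distr_pair_fst using ae0 .
  qed
  have aeM: "AE u in ?M. \<bar>u\<bar> \<le> R + h"
    unfolding mix_def
  proof (subst AE_distr_iff[OF Tm])
    show "{x \<in> space borel. \<bar>x\<bar> \<le> R + h} \<in> sets borel" by measurable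
    show "AE x in \<rho> \<Otimes>\<^sub>M coin. \<bar>Tm h B x\<bar> \<le> R + h"
      using aeO
    proof eventually_elim
      case (elim \<omega>)
      obtain x s where w: "\<omega> = (x, s)" by (cases \<omega>)
      show ?case using elim h0 by (auto simp: w Tm_def indicator_def)
    qed
  qed
  have MP: "?M \<in> P_lambda lam"
    unfolding P_lambda_def
  proof (intro CollectI conjI psM sM)
    have m1: "(\<lambda>x. \<bar>x\<bar> powr lam) \<in> borel_measurable ?M"
      using sM by (simp cong: measurable_cong_sets)
    have a1: "AE x in ?M. norm (\<bar>x\<bar> powr lam) \<le> (R + h) powr lam"
      using aeM by eventually_elim (use assms(3) in \<open>auto intro: powr_mono2\<close>)
    show "integrable ?M (\<lambda>x. \<bar>x\<bar> powr lam)"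
      by (rule finite_measure.integrable_const_bound[OF prob_space.finite_measure[OF psM] a1 m1])
  qed
  have "wasserstein lam \<rho> ?M \<le> h"
    by (rule wass_bound[OF ps sb Bm]) (use h0 assms(3) in auto)
  hence Eineq: "energy p q \<rho> \<le> energy p q ?M" using minim[OF MP] h0 by simp
  define K where "K = 2 * R + 2 * h"
  have K0: "K \<ge> 0" using rR r_pos h0 unfolding K_def by simp
  have E1: "energy p q \<rho> = ereal (1/2 * (\<integral>z. Vc p q K (fst z - snd z) \<partial>(\<rho> \<Otimes>\<^sub>M \<rho>)))"
    by (rule energy_eq[OF ps sb _ _ K0 pq, of R]) (use ae0 h0 in \<open>auto simp: K_def elim: AE_mp\<close>)
  have E2: "energy p q ?M = ereal (1/2 * (\<integral>z. Vc p q K (fst z - snd z) \<partial>(?M \<Otimes>\<^sub>M ?M)))"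
    by (rule energy_eq[OF psM sM aeM _ K0 pq]) (simp add: K_def)
  let ?b = "indicator B :: real \<Rightarrow> real"
  define F where "F u v = Vc p q K (u - v)" for u v
  have Fm: "(\<lambda>(x, y). F x y) \<in> borel_measurable (borel \<Otimes>\<^sub>M borel)"
    unfolding F_def by measurable
  define Bd where "Bd = K powr p / p + K powr q / q"
  have Fb: "\<bar>F u v\<bar> \<le> Bd" for u v unfolding F_def Bd_def by (rule Vc_bound[OF K0 pq])
  define X where "X z = (F (fst z + h * ?b (fst z)) (snd z + h * ?b (snd z))
          + F (fst z + h * ?b (fst z)) (snd z - h * ?b (snd z))
          + F (fst z - h * ?b (fst z)) (snd z + h * ?b (snd z))
          + F (fst z - h * ?b (fst z)) (snd z - h * ?b (snd z))) / 4" for z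
  define Y where "Y z = F (fst z) (snd z)" for z
  have I2: "(\<integral>z. Vc p q K (fst z - snd z) \<partial>(?M \<Otimes>\<^sub>M ?M)) = (\<integral>z. X z \<partial>(\<rho> \<Otimes>\<^sub>M \<rho>))"
    using mix2_integral[OF ps sb Bm Fm Fb, of h] unfolding X_def F_def by simp
  have fmRR: "finite_measure (\<rho> \<Otimes>\<^sub>M \<rho>)"
    using ps by (simp add: prob_space.finite_measure prob_space_pair)
  have sRR: "sets (\<rho> \<Otimes>\<^sub>M \<rho>) = sets (borel \<Otimes>\<^sub>M borel)"
    by (intro sets_pair_measure_cong) (simp_all add: sb)
  have Xm: "X \<in> borel_measurable (\<rho> \<Otimes>\<^sub>M \<rho>)"
  proof -
    have "X \<in> borel_measurable (borel \<Otimes>\<^sub>M borel)" unfolding X_def F_def by measurable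
    thus ?thesis using sRR by (simp cong: measurable_cong_sets)
  qed
  have Ym: "Y \<in> borel_measurable (\<rho> \<Otimes>\<^sub>M \<rho>)"
  proof -
    have "Y \<in> borel_measurable (borel \<Otimes>\<^sub>M borel)" unfolding Y_def F_def by measurable
    thus ?thesis using sRR by (simp cong: measurable_cong_sets)
  qed
  have Xb: "\<bar>X z\<bar> \<le> Bd" for z
    using Fb[of "fst z + h * ?b (fst z)" "snd z + h * ?b (snd z)"]
      Fb[of "fst z + h * ?b (fst z)" "snd z - h * ?b (snd z)"]
      Fb[of "fst z - h * ?b (fst z)" "snd z + h * ?b (snd z)"]
      Fb[of "fst z - h * ?b (fst z)" "snd z - h * ?b (snd z)"]
    unfolding X_def by (simp add: abs_le_iff)
  have iX: "integrable (\<rho> \<Otimes>\<^sub>M \<rho>) X" by (rule integrable_bdd[OF fmRR Xm Xb])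
  have iY: "integrable (\<rho> \<Otimes>\<^sub>M \<rho>) Y" by (rule integrable_bdd[OF fmRR Ym, of Bd]) (simp add: Y_def Fb)
  have aeRR: "AE z in \<rho> \<Otimes>\<^sub>M \<rho>. fst z \<in> {0..R} \<and> snd z \<in> {0..R}"
  proof (rule RR.AE_pair_measure)
    show "{x \<in> space (\<rho> \<Otimes>\<^sub>M \<rho>). fst x \<in> {0..R} \<and> snd x \<in> {0..R}} \<in> sets (\<rho> \<Otimes>\<^sub>M \<rho>)"
    proof -
      have "{x \<in> space (\<rho> \<Otimes>\<^sub>M \<rho>). fst x \<in> {0..R} \<and> snd x \<in> {0..R}} = {0..R} \<times> {0..R}"
        using sb by (auto simp: space_pair_measure sets_eq_imp_space_eq)
      thus ?thesis using sb by simp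
    qed
    show "AE x in \<rho>. AE y in \<rho>. fst (x, y) \<in> {0..R} \<and> snd (x, y) \<in> {0..R}"
      using ae0 by eventually_elim (use ae0 in \<open>auto elim: AE_mp\<close>)
  qed
  have Vc_eq: "Vc p q K d = Vpot p q d" if "\<bar>d\<bar> \<le> K" for d
    using that by (simp add: Vc_def)
  have XYpt: "X z \<le> Y z \<and> (fst z \<in> B \<longrightarrow> snd z \<notin> B \<longrightarrow> X z < Y z)"
    if z: "fst z \<in> {0..R}" "snd z \<in> {0..R}" for z
  proof -
    obtain x y where zz: "z = (x, y)" by (cases z)
    have xy: "x \<in> {0..R}" "y \<in> {0..R}" using z zz by auto
    have bb: "0 \<le> ?b t" "?b t \<le> 1" for t by (auto simp: indicator_def)
    have args: "\<bar>(x + s1 * h * ?b x) - (y + s2 * h * ?b y)\<bar> \<le> K"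
      if "\<bar>s1\<bar> \<le> 1" "\<bar>s2\<bar> \<le> 1" for s1 s2
    proof -
      have "\<bar>s1 * h * ?b x\<bar> \<le> h" "\<bar>s2 * h * ?b y\<bar> \<le> h"
        using that h0 bb by (auto simp: indicator_def abs_mult)
      moreover have gen: "\<And>a c. \<bar>a\<bar> \<le> h \<Longrightarrow> \<bar>c\<bar> \<le> h \<Longrightarrow> \<bar>x + a - (y + c)\<bar> \<le> K"
        using xy h0 unfolding K_def by (auto simp: abs_le_iff)
      ultimately show ?thesis by blast
    qed
    have Xe: "X z = (Vpot p q ((x + h * ?b x) - (y + h * ?b y)) + Vpot p q ((x + h * ?b x) - (y - h * ?b y))
      + Vpot p q ((x - h * ?b x) - (y + h * ?b y)) + Vpot p q ((x - h * ?b x) - (y - h * ?b y))) / 4"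
      using args[of 1 1] args[of 1 "-1"] args[of "-1" 1] args[of "-1" "-1"]
      unfolding X_def F_def zz by (simp add: Vc_eq)
    have Ye: "Y z = Vpot p q (x - y)"
      using args[of 0 0] unfolding Y_def F_def zz by (simp add: Vc_eq)
    note av = avg_le[OF xy h0(1) c1 c2 c3]
    have "X z \<le> Y z" using Xe Ye av(1) unfolding B_def by linarith
    moreover have "X z < Y z" if "fst z \<in> B" "snd z \<notin> B"
    proof -
      have "x \<in> ball x0 \<epsilon>" "y \<notin> ball x0 \<epsilon>" using that zz B_def by auto
      thus ?thesis using Xe Ye av(2) unfolding B_def by linarith
    qed
    ultimately show ?thesis by blast
  qed
  obtain z where z: "z \<in> msupp \<rho>" "z < x0 - \<epsilon>"
    using cInf_lessD[of "msupp \<rho>" "x0 - \<epsilon>"] x0(1) assms(9) x0(2) l0 c1 h0 e0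
      unfolding \<epsilon>_def \<kappa>_def by fastforce
  define \<delta> where "\<delta> = x0 - \<epsilon> - z"
  have \<delta>: "\<delta> > 0" using z unfolding \<delta>_def by simp
  have dis: "y \<notin> B" if "y \<in> ball z \<delta>" for y
    using that unfolding B_def \<delta>_def by (auto simp: dist_real_def)
  have mB: "emeasure \<rho> B > 0" using x0(1) e0 unfolding msupp_def B_def by auto
  have mZ: "emeasure \<rho> (ball z \<delta>) > 0" using z(1) \<delta> unfolding msupp_def by auto
  have mA: "emeasure (\<rho> \<Otimes>\<^sub>M \<rho>) (B \<times> ball z \<delta>) \<noteq> 0"
  proof -
    have "emeasure (\<rho> \<Otimes>\<^sub>M \<rho>) (B \<times> ball z \<delta>) = emeasure \<rho> B * emeasure \<rho> (ball z \<delta>)"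
      by (rule sigma_finite_measure.emeasure_pair_measure_Times[OF prob_space_imp_sigma_finite[OF ps]]) (use sb in auto)
    thus ?thesis using mB mZ by (simp add: zero_less_iff_neq_zero)
  qed
  have AB: "B \<times> ball z \<delta> \<in> sets (\<rho> \<Otimes>\<^sub>M \<rho>)" using sb by simp
  have "(\<integral>z. X z \<partial>(\<rho> \<Otimes>\<^sub>M \<rho>)) < (\<integral>z. Y z \<partial>(\<rho> \<Otimes>\<^sub>M \<rho>))"
  proof (rule finite_measure.integral_less_AE[OF fmRR iX iY mA AB])
    show "AE w\<in>B \<times> ball z \<delta> in \<rho> \<Otimes>\<^sub>M \<rho>. X w \<noteq> Y w"
      using aeRR by eventually_elim (use XYpt dis in fastforce)
    show "AE w in \<rho> \<Otimes>\<^sub>M \<rho>. X w \<le> Y w"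
      using aeRR by eventually_elim (use XYpt in blast)
  qed
  hence "energy p q ?M < energy p q \<rho>"
    unfolding E1 E2 I2 Y_def F_def by simp
  thus False using Eineq by simp
qed


end
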